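(* Let $G$ be a finite group and let $\pi$ be a set of primes. Then \[|\mathrm{Ord}(G,\pi)|\ \ge \prod_{C \text{ a chief factor of } G} f_\pi(C),\] where the product is over the chief factors of a chief series of $G$ (with multiplicity).
   Context: For a subset $X$ of a finite group and a set $\pi$ of primes, $\mathrm{Ord}(X,\pi)$ is the set of $\pi$-elements of $X$ (elements all of whose order's prime divisors lie in $\pi$). For $G=S^t$ a direct power of a simple group $S$, define $f_\pi(G)=1$ if $S$ is an abelian $\pi'$-group; $f_\pi(G)=|G|$ if $G$ is an abelian $\pi$-group; and, if $S$ is nonabelian, $f_\pi(G)=\min\{|\mathrm{Ord}(G\alpha,\pi)| : \alpha\in\mathrm{Ord}(\mathrm{Aut}(G),\pi)\}$, where the coset $G\alpha$ is viewed as a subset of $\mathrm{Aut}(G)$ (with $G$ identified with $\mathrm{Inn}(G)$). Every chief factor of a finite group is of the form $S^t$. *)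

theory Defs
  imports "HOL-Algebra.Algebra"
begin

definition Ord_pi :: "('a, 'b) monoid_scheme \<Rightarrow> 'a set \<Rightarrow> nat set \<Rightarrow> 'a set" where
  "Ord_pi Gr Y \<pi> = {x \<in> Y. x \<in> carrier Gr \<and>
      (\<forall>p. Factorial_Ring.prime p \<longrightarrow> p dvd group.ord Gr x \<longrightarrow> p \<in> \<pi>)}"

definition Ord_pi' :: "('a, 'b) monoid_scheme \<Rightarrow> 'a set \<Rightarrow> nat set \<Rightarrow> 'a set" where
  "Ord_pi' Gr Y \<pi> = {x \<in> Y. x \<in> carrier Gr \<and>
      (\<forall>p. Factorial_Ring.prime p \<longrightarrow> p dvd group.ord Gr x \<longrightarrow> p \<notin> \<pi>)}"

definition inn :: "('a, 'b) monoid_scheme \<Rightarrow> 'a \<Rightarrow> ('a \<Rightarrow> 'a)" where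
  "inn G g = (\<lambda>x \<in> carrier G. g \<otimes>\<^bsub>G\<^esub> x \<otimes>\<^bsub>G\<^esub> inv\<^bsub>G\<^esub> g)"

definition Inn :: "('a, 'b) monoid_scheme \<Rightarrow> ('a \<Rightarrow> 'a) set" where
  "Inn G = inn G ` carrier G"

text \<open>The function f_pi of a chief factor C (which is isomorphic to S^t, S simple).
  C is abelian iff S is; C is a \<pi>-group (\<pi>'-group) iff S is.\<close>
definition f_pi :: "nat set \<Rightarrow> ('a, 'b) monoid_scheme \<Rightarrow> nat" where
  "f_pi \<pi> C =
    (if comm_group C \<and> Ord_pi' C (carrier C) \<pi> = carrier C then 1
     else if comm_group C \<and> Ord_pi C (carrier C) \<pi> = carrier C then order C
     else Min {card (Ord_pi (AutoGroup C) (Inn C #>\<^bsub>AutoGroup C\<^esub> \<alpha>) \<pi>) | \<alpha>.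
                 \<alpha> \<in> Ord_pi (AutoGroup C) (carrier (AutoGroup C)) \<pi>})"

definition chief_series :: "('a, 'b) monoid_scheme \<Rightarrow> 'a set list \<Rightarrow> bool" where
  "chief_series G Ns \<longleftrightarrow> Ns \<noteq> [] \<and> hd Ns = {\<one>\<^bsub>G\<^esub>} \<and> last Ns = carrier G \<and>
     (\<forall>i < length Ns. Ns ! i \<lhd> G) \<and>
     (\<forall>i. Suc i < length Ns \<longrightarrow> Ns ! i \<subset> Ns ! Suc i \<and>
        \<not> (\<exists>M. M \<lhd> G \<and> Ns ! i \<subset> M \<and> M \<subset> Ns ! Suc i))"

definition chief_factor :: "('a, 'b) monoid_scheme \<Rightarrow> 'a set list \<Rightarrow> nat \<Rightarrow> 'a set monoid" where
  "chief_factor G Ns i = (G\<lparr>carrier := Ns ! Suc i\<rparr>) Mod (Ns ! i)"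

end

theory Submission imports Defs begin

definition pinum :: "nat set \<Rightarrow> nat \<Rightarrow> bool" where
  "pinum \<pi> m \<longleftrightarrow> m > 0 \<and> (\<forall>p. Factorial_Ring.prime p \<longrightarrow> p dvd m \<longrightarrow> p \<in> \<pi>)"

lemma pinum_mult: "pinum \<pi> a \<Longrightarrow> pinum \<pi> b \<Longrightarrow> pinum \<pi> (a*b)"
  by (auto simp: pinum_def prime_dvd_mult_iff)

lemma pinum_dvd: "pinum \<pi> a \<Longrightarrow> b dvd a \<Longrightarrow> pinum \<pi> b"
  unfolding pinum_def by (metis dvd_trans gr0I dvd_0_left_iff)

lemma pi_decomp:
  fixes n :: nat
  shows "n > 0 \<Longrightarrow> \<exists>a b. n = a*b \<and> pinum \<pi> a \<and> coprime a b \<and>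
           (\<forall>p. Factorial_Ring.prime p \<longrightarrow> p dvd b \<longrightarrow> p \<notin> \<pi>)"
proof (induction n rule: less_induct)
  case (less n)
  show ?case
  proof (cases "\<exists>p. Factorial_Ring.prime p \<and> p dvd n \<and> p \<notin> \<pi>")
    case False
    then have "pinum \<pi> n" using less.prems by (auto simp: pinum_def)
    then show ?thesis by (intro exI[of _ n] exI[of _ 1]) auto
  next
    case True
    then obtain p where p: "Factorial_Ring.prime p" "p dvd n" "p \<notin> \<pi>" by blast
    then obtain n' where n': "n = p * n'" by (auto elim: dvdE)
    have pg: "p > 1" using p(1) prime_gt_1_nat by blast
    have "n' > 0" using less.prems n' by (cases n') auto
    moreover have "n' < n" using n' pg \<open>n' > 0\<close> by simp
    ultimately obtain a b where ab: "n' = a*b" "pinum \<pi> a" "coprime a b"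
       "\<forall>q. Factorial_Ring.prime q \<longrightarrow> q dvd b \<longrightarrow> q \<notin> \<pi>" using less.IH by blast
    have "\<not> p dvd a" using ab(2) p by (auto simp: pinum_def)
    then have "coprime a p" using p(1) by (metis prime_imp_coprime coprime_commute)
    then have "coprime a (p*b)" using ab(3) by simp
    moreover have "\<forall>q. Factorial_Ring.prime q \<longrightarrow> q dvd p*b \<longrightarrow> q \<notin> \<pi>"
      using ab(4) p by (metis prime_dvd_mult_iff primes_dvd_imp_eq)
    ultimately show ?thesis using ab n' by (intro exI[of _ a] exI[of _ "p*b"]) auto
  qed
qed

lemma (in group) pi_of_pow:
  assumes "x \<in> carrier G" "pinum \<pi> m" "x [^] m = \<one>"
  shows "\<forall>p. Factorial_Ring.prime p \<longrightarrow> p dvd ord x \<longrightarrow> p \<in> \<pi>"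
proof -
  have "ord x dvd m" using assms pow_eq_id by blast
  then show ?thesis using assms(2) unfolding pinum_def using dvd_trans by blast
qed

lemma (in group) pi_to_pow:
  assumes "x \<in> carrier G" "finite (carrier G)" "\<forall>p. Factorial_Ring.prime p \<longrightarrow> p dvd ord x \<longrightarrow> p \<in> \<pi>"
  shows "\<exists>m. pinum \<pi> m \<and> x [^] m = \<one>"
  using assms ord_ge_1[OF assms(2,1)] by (intro exI[of _ "ord x"]) (auto simp: pinum_def)

lemma (in group) Ord_pi_iff:
  assumes "finite (carrier G)"
  shows "x \<in> Ord_pi G Y \<pi> \<longleftrightarrow> x \<in> Y \<and> x \<in> carrier G \<and> (\<exists>m. pinum \<pi> m \<and> x [^] m = \<one>)"
  unfolding Ord_pi_def using pi_of_pow pi_to_pow assms by blast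

lemma (in group) Ord_pi_I:
  assumes "x \<in> Y" "x \<in> carrier G" "pinum \<pi> m" "x [^] m = \<one>"
  shows "x \<in> Ord_pi G Y \<pi>"
  unfolding Ord_pi_def using pi_of_pow assms by blast

lemma coprime_by_primes:
  fixes u b :: nat
  assumes "\<And>p. Factorial_Ring.prime p \<Longrightarrow> p dvd u \<Longrightarrow> p dvd b \<Longrightarrow> False"
  shows "coprime u b"
proof (rule ccontr)
  assume "\<not> coprime u b"
  then have "gcd u b \<noteq> 1" by (simp add: coprime_iff_gcd_eq_1)
  then obtain p where "Factorial_Ring.prime p" "p dvd gcd u b" using prime_factor_nat by blast
  then show False using assms by auto
qed

lemma lift_pi:
  assumes G: "group G" and H: "group H" and fin: "finite (carrier G)"
    and hom: "\<phi> \<in> hom G H" and x0: "x0 \<in> carrier G"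
    and m: "pinum \<pi> m" "\<phi> x0 [^]\<^bsub>H\<^esub> m = \<one>\<^bsub>H\<^esub>"
  shows "\<exists>x\<in>carrier G. \<phi> x = \<phi> x0 \<and> (\<exists>k. pinum \<pi> k \<and> x [^]\<^bsub>G\<^esub> k = \<one>\<^bsub>G\<^esub>)"
proof -
  interpret G: group G by fact
  interpret H: group H by fact
  interpret gh: group_hom G H \<phi> using hom by (unfold_locales) auto
  define y where "y = \<phi> x0"
  have y: "y \<in> carrier H" using x0 hom y_def by (auto simp: hom_def)
  define n where "n = G.ord x0"
  have n: "n > 0" using G.ord_ge_1[OF fin x0] n_def by simp
  obtain a b where ab: "n = a*b" "pinum \<pi> a" "coprime a b"
      "\<forall>p. Factorial_Ring.prime p \<longrightarrow> p dvd b \<longrightarrow> p \<notin> \<pi>"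
    using pi_decomp[OF n] by blast
  have "y [^]\<^bsub>H\<^esub> n = \<one>\<^bsub>H\<^esub>"
    using gh.hom_nat_pow[OF x0, of n] x0 n_def y_def by simp
  then have oyn: "H.ord y dvd a*b" using H.pow_eq_id[OF y] ab(1) by simp
  have oym: "H.ord y dvd m" using m(2) H.pow_eq_id[OF y] y_def by simp
  have "coprime (H.ord y) b"
    using oym m(1) ab(4) by (intro coprime_by_primes) (meson dvd_trans pinum_def)
  then have oya: "H.ord y dvd a" using oyn coprime_dvd_mult_left_iff by blast
  have "b \<noteq> 0" using n ab(1) by auto
  then obtain s t where st: "b*s = a*t + gcd b a" using bezout_nat by blast
  have "gcd b a = 1" using ab(3) by (simp add: coprime_iff_gcd_eq_1 gcd.commute)
  with st have st: "b*s = a*t + 1" by simp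
  define x where "x = x0 [^]\<^bsub>G\<^esub> (b*s)"
  have xc: "x \<in> carrier G" using x0 x_def by simp
  have "\<phi> x = y [^]\<^bsub>H\<^esub> (a*t + 1)" unfolding x_def st y_def by (rule gh.hom_nat_pow[OF x0])
  also have "\<dots> = (y [^]\<^bsub>H\<^esub> a) [^]\<^bsub>H\<^esub> t \<otimes>\<^bsub>H\<^esub> y"
    using y by (simp add: H.nat_pow_pow)
  also have "y [^]\<^bsub>H\<^esub> a = \<one>\<^bsub>H\<^esub>" using oya H.pow_eq_id[OF y] by simp
  finally have px: "\<phi> x = \<phi> x0" using y y_def by simp
  have "x [^]\<^bsub>G\<^esub> a = x0 [^]\<^bsub>G\<^esub> (n*s)"
    using x0 x_def ab(1) by (simp add: G.nat_pow_pow mult.commute mult.left_commute)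
  also have "\<dots> = \<one>\<^bsub>G\<^esub>" using G.pow_eq_id[OF x0] n_def by simp
  finally show ?thesis using xc px ab(2) by blast
qed


lemma count_fibers:
  assumes Q: "group Q" and Q': "group Q'" and fin: "finite (carrier Q)"
    and surj: "\<phi> ` carrier Q = carrier Q'"
    and fib: "\<forall>y \<in> Ord_pi Q' (carrier Q') \<pi>. f \<le> card {x \<in> Ord_pi Q (carrier Q) \<pi>. \<phi> x = y}"
  shows "f * card (Ord_pi Q' (carrier Q') \<pi>) \<le> card (Ord_pi Q (carrier Q) \<pi>)"
proof -
  let ?O' = "Ord_pi Q' (carrier Q') \<pi>"
  let ?O = "Ord_pi Q (carrier Q) \<pi>"
  let ?F = "\<lambda>y. {x \<in> ?O. \<phi> x = y}"
  have fin': "finite (carrier Q')" using surj fin by (metis finite_imageI)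
  have fO': "finite ?O'" using fin' by (rule rev_finite_subset) (auto simp: Ord_pi_def)
  have fO: "finite ?O" using fin by (rule rev_finite_subset) (auto simp: Ord_pi_def)
  have "f * card ?O' = (\<Sum>y\<in>?O'. f)" by simp
  also have "\<dots> \<le> (\<Sum>y\<in>?O'. card (?F y))" using fib by (intro sum_mono) auto
  also have "\<dots> = card (\<Union>y\<in>?O'. ?F y)"
    by (rule card_UN_disjoint[symmetric]) (use fO' fO in auto)
  also have "\<dots> \<le> card ?O" by (rule card_mono[OF fO]) auto
  finally show ?thesis .
qed

definition cj :: "('a, 'b) monoid_scheme \<Rightarrow> 'a set \<Rightarrow> 'a \<Rightarrow> ('a \<Rightarrow> 'a)" where
  "cj Q K z = (\<lambda>k\<in>K. z \<otimes>\<^bsub>Q\<^esub> k \<otimes>\<^bsub>Q\<^esub> inv\<^bsub>Q\<^esub> z)"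

context group begin

lemma cj_conj_cancel:
  assumes "z \<in> carrier G" "a \<in> carrier G" "b \<in> carrier G"
  shows "(z \<otimes> a \<otimes> inv z) \<otimes> (z \<otimes> b \<otimes> inv z) = z \<otimes> (a \<otimes> b) \<otimes> inv z"
  using assms by (simp add: m_assoc[symmetric]) (simp add: m_assoc)

lemma cj_auto:
  assumes KN: "K \<lhd> G" and z: "z \<in> carrier G"
  shows "cj G K z \<in> carrier (AutoGroup (G\<lparr>carrier := K\<rparr>))"
proof -
  have Ksub: "K \<subseteq> carrier G" using KN normal_imp_subgroup subgroup.subset by blast
  have cl: "\<And>k. k \<in> K \<Longrightarrow> z \<otimes> k \<otimes> inv z \<in> K" using KN z normal_inv_iff by blast
  have hom: "cj G K z \<in> hom (G\<lparr>carrier := K\<rparr>) (G\<lparr>carrier := K\<rparr>)"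
  proof (rule homI)
    fix a assume "a \<in> carrier (G\<lparr>carrier := K\<rparr>)" then show "cj G K z a \<in> carrier (G\<lparr>carrier := K\<rparr>)"
      using cl by (simp add: cj_def)
  next
    fix a b assume ab: "a \<in> carrier (G\<lparr>carrier := K\<rparr>)" "b \<in> carrier (G\<lparr>carrier := K\<rparr>)"
    then have "a \<otimes> b \<in> K" using KN normal_imp_subgroup subgroup.m_closed by fastforce
    moreover have "a \<in> carrier G" "b \<in> carrier G" using ab Ksub by auto
    ultimately show "cj G K z (a \<otimes>\<^bsub>G\<lparr>carrier := K\<rparr>\<^esub> b) = cj G K z a \<otimes>\<^bsub>G\<lparr>carrier := K\<rparr>\<^esub> cj G K z b"
      using ab z by (simp add: cj_def cj_conj_cancel)
  qed
  have "bij_betw (cj G K z) K K"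
  proof (rule bij_betw_imageI)
    show "inj_on (cj G K z) K"
    proof (rule inj_onI)
      fix a b assume "a \<in> K" "b \<in> K" "cj G K z a = cj G K z b"
      then have "z \<otimes> a \<otimes> inv z = z \<otimes> b \<otimes> inv z" "a \<in> carrier G" "b \<in> carrier G"
        using Ksub by (auto simp: cj_def)
      then show "a = b" using z by (metis inv_closed l_cancel m_closed r_cancel)
    qed
    show "cj G K z ` K = K"
    proof
      show "cj G K z ` K \<subseteq> K" using cl by (auto simp: cj_def)
      show "K \<subseteq> cj G K z ` K"
      proof
        fix k assume k: "k \<in> K"
        have "inv z \<otimes> k \<otimes> inv (inv z) \<in> K" using KN z k normal_inv_iff by blast
        then have k': "inv z \<otimes> k \<otimes> z \<in> K" using z by simp
        have kc: "k \<in> carrier G" using k Ksub by auto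
        have "z \<otimes> (inv z \<otimes> k \<otimes> z) \<otimes> inv z = k" using kc z
          by (simp add: m_assoc[symmetric]) (simp add: m_assoc)
        then have "cj G K z (inv z \<otimes> k \<otimes> z) = k" using k' by (simp add: cj_def)
        then show "k \<in> cj G K z ` K" using k' by force
      qed
    qed
  qed
  then have "cj G K z \<in> Bij K" by (simp add: Bij_def cj_def)
  then show ?thesis using hom by (simp add: AutoGroup_def auto_def)
qed

lemma cj_mult:
  assumes KN: "K \<lhd> G" and a: "a \<in> carrier G" and b: "b \<in> carrier G"
  shows "cj G K a \<otimes>\<^bsub>AutoGroup (G\<lparr>carrier := K\<rparr>)\<^esub> cj G K b = cj G K (a \<otimes> b)"
proof -
  have Ksub: "K \<subseteq> carrier G" using KN normal_imp_subgroup subgroup.subset by blast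
  have "cj G K a \<in> Bij K" "cj G K b \<in> Bij K"
    using cj_auto[OF KN a] cj_auto[OF KN b] by (auto simp: AutoGroup_def auto_def)
  moreover have "\<And>k. k \<in> K \<Longrightarrow> b \<otimes> k \<otimes> inv b \<in> K" using KN b normal_inv_iff by blast
  moreover have "\<And>k. k \<in> K \<Longrightarrow> a \<otimes> (b \<otimes> k \<otimes> inv b) \<otimes> inv a = a \<otimes> b \<otimes> k \<otimes> inv (a \<otimes> b)"
    using Ksub a b by (auto simp: inv_mult_group m_assoc)
  ultimately show ?thesis
    by (auto simp: AutoGroup_def BijGroup_def compose_def cj_def intro!: restrict_ext)
qed

lemma cj_one:
  assumes KN: "K \<lhd> G"
  shows "\<one>\<^bsub>AutoGroup (G\<lparr>carrier := K\<rparr>)\<^esub> = cj G K \<one>"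
proof -
  have Ksub: "K \<subseteq> carrier G" using KN normal_imp_subgroup subgroup.subset by blast
  then show ?thesis by (auto simp: AutoGroup_def BijGroup_def cj_def intro!: restrict_ext)
qed

lemma cj_pow:
  assumes KN: "K \<lhd> G" and z: "z \<in> carrier G"
  shows "cj G K z [^]\<^bsub>AutoGroup (G\<lparr>carrier := K\<rparr>)\<^esub> (n::nat) = cj G K (z [^] n)"
proof (induction n)
  case 0 then show ?case using cj_one[OF KN] by simp
next
  case (Suc n) then show ?case using cj_mult[OF KN _ z, of "z [^] n"] z by simp
qed

lemma cj_eq_one:
  assumes KN: "K \<lhd> G" and w: "w \<in> carrier G"
    and eq: "cj G K w = \<one>\<^bsub>AutoGroup (G\<lparr>carrier := K\<rparr>)\<^esub>" and j: "j \<in> K"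
  shows "w \<otimes> j = j \<otimes> w"
proof -
  have Ksub: "K \<subseteq> carrier G" using KN normal_imp_subgroup subgroup.subset by blast
  have "j \<in> carrier G" using j Ksub by auto
  then have "cj G K w j = j" using eq cj_one[OF KN] j by (simp add: cj_def)
  then have e: "w \<otimes> j \<otimes> inv w = j" using j by (simp add: cj_def)
  have "w \<otimes> j = (w \<otimes> j \<otimes> inv w) \<otimes> w" using w \<open>j \<in> carrier G\<close> by (simp add: m_assoc)
  then show ?thesis using e by simp
qed

lemma inn_cj:
  assumes KN: "K \<lhd> G" and g: "g \<in> K"
  shows "inn (G\<lparr>carrier := K\<rparr>) g = cj G K g"
proof -
  have Ks: "subgroup K G" using KN normal_imp_subgroup by blast
  show ?thesis using g m_inv_consistent[OF Ks g] by (simp add: inn_def cj_def)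
qed

lemma cancel1: "x \<in> carrier G \<Longrightarrow> y \<in> carrier G \<Longrightarrow> x \<otimes> (inv x \<otimes> y) = y"
  by (simp add: m_assoc[symmetric])
lemma cancel2: "x \<in> carrier G \<Longrightarrow> y \<in> carrier G \<Longrightarrow> inv x \<otimes> (x \<otimes> y) = y"
  by (simp add: m_assoc[symmetric])
lemma comm_inv:
  assumes "a \<in> carrier G" "j \<in> carrier G" "a \<otimes> j = j \<otimes> a"
  shows "inv a \<otimes> j = j \<otimes> inv a"
proof -
  have c: "a \<in> carrier G" "j \<in> carrier G" using assms by auto
  have "inv a \<otimes> j = inv a \<otimes> (j \<otimes> a) \<otimes> inv a" using c by (simp add: m_assoc)
  also have "\<dots> = inv a \<otimes> (a \<otimes> j) \<otimes> inv a" using assms(3) by simp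
  also have "\<dots> = j \<otimes> inv a" using c by (simp add: m_assoc cancel2)
  finally show ?thesis .
qed
lemma comm_mult:
  assumes "a \<in> carrier G" "b \<in> carrier G" "j \<in> carrier G" "a \<otimes> j = j \<otimes> a" "b \<otimes> j = j \<otimes> b"
  shows "a \<otimes> b \<otimes> j = j \<otimes> (a \<otimes> b)"
  using assms by (metis m_assoc)
lemma comm_conj:
  assumes "x \<in> carrier G" "h \<in> carrier G" "j \<in> carrier G"
    and "h \<otimes> (inv x \<otimes> j \<otimes> x) = (inv x \<otimes> j \<otimes> x) \<otimes> h"
  shows "(x \<otimes> h \<otimes> inv x) \<otimes> j = j \<otimes> (x \<otimes> h \<otimes> inv x)"
proof -
  have "x \<otimes> (h \<otimes> (inv x \<otimes> j \<otimes> x)) \<otimes> inv x = x \<otimes> ((inv x \<otimes> j \<otimes> x) \<otimes> h) \<otimes> inv x"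
    using assms by simp
  then show ?thesis using assms by (simp add: m_assoc cancel1 cancel2)
qed

lemma finite_Auto:
  assumes "finite K"
  shows "finite (carrier (AutoGroup (G\<lparr>carrier := K\<rparr>)))"
proof -
  have "carrier (AutoGroup (G\<lparr>carrier := K\<rparr>)) \<subseteq> PiE K (\<lambda>_. K)"
    by (auto simp: AutoGroup_def auto_def Bij_def PiE_def bij_betw_def)
  moreover have "finite (PiE K (\<lambda>_. K))" using assms by (simp add: finite_PiE)
  ultimately show ?thesis by (rule finite_subset)
qed

end


lemma ord_sub_eq:
  assumes Q: "group Q" and Ks: "subgroup K Q"
  shows "group.ord (Q\<lparr>carrier := K\<rparr>) k = group.ord Q k"
proof -
  have gC: "group (Q\<lparr>carrier := K\<rparr>)" using subgroup.subgroup_is_group[OF Ks Q] .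
  have pw: "\<And>n. k [^]\<^bsub>Q\<lparr>carrier := K\<rparr>\<^esub> (n::nat) = k [^]\<^bsub>Q\<^esub> n"
    by (simp add: nat_pow_def)
  have o: "\<one>\<^bsub>Q\<lparr>carrier := K\<rparr>\<^esub> = \<one>\<^bsub>Q\<^esub>" by simp
  show ?thesis
    unfolding group.ord_def[OF gC] group.ord_def[OF Q] pw o ..
qed

lemma fiber_bound:
  assumes Q: "group Q" and Q': "group Q'" and fin: "finite (carrier Q)"
    and hom: "\<phi> \<in> hom Q Q'" and surj: "\<phi> ` carrier Q = carrier Q'"
    and Kdef: "K = {x \<in> carrier Q. \<phi> x = \<one>\<^bsub>Q'\<^esub>}"
    and minimal: "\<And>M. M \<lhd> Q \<Longrightarrow> M \<subseteq> K \<Longrightarrow> M = {\<one>\<^bsub>Q\<^esub>} \<or> M = K"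
    and y: "y \<in> carrier Q'" and ym: "pinum \<pi> m" "y [^]\<^bsub>Q'\<^esub> m = \<one>\<^bsub>Q'\<^esub>"
  shows "f_pi \<pi> (Q\<lparr>carrier := K\<rparr>) \<le> card {x \<in> Ord_pi Q (carrier Q) \<pi>. \<phi> x = y}"
proof -
  interpret Q: group Q by fact
  interpret Q': group Q' by fact
  interpret gh: group_hom Q Q' \<phi> using hom by (unfold_locales) auto
  have KN: "K \<lhd> Q" using gh.normal_kernel Kdef by (simp add: kernel_def)
  have Ks: "subgroup K Q" using KN normal_imp_subgroup by blast
  have Ksub: "K \<subseteq> carrier Q" using Ks subgroup.subset by blast
  define C where "C = Q\<lparr>carrier := K\<rparr>"
  have gC: "group C" unfolding C_def using subgroup.subgroup_is_group[OF Ks Q] .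
  define A where "A = AutoGroup C"
  have gA: "group A" unfolding A_def using group.AutoGroup[OF gC] .
  have finK: "finite K" using fin Ksub finite_subset by blast
  have finA: "finite (carrier A)" unfolding A_def C_def using Q.finite_Auto[OF finK] .
  define F where "F = {x \<in> Ord_pi Q (carrier Q) \<pi>. \<phi> x = y}"
  have finF: "finite F" using fin by (rule rev_finite_subset) (auto simp: F_def Ord_pi_def)
  have "y \<in> \<phi> ` carrier Q" using surj y by simp
  then obtain x0 where x0: "x0 \<in> carrier Q" "\<phi> x0 = y" by (rule imageE) auto
  have "\<exists>x\<in>carrier Q. \<phi> x = \<phi> x0 \<and> (\<exists>k. pinum \<pi> k \<and> x [^]\<^bsub>Q\<^esub> k = \<one>\<^bsub>Q\<^esub>)"
    by (rule lift_pi[OF Q Q' fin hom x0(1) ym(1)]) (simp add: x0(2) ym(2))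
  then obtain x kx where x: "x \<in> carrier Q" "\<phi> x = y" and xk: "pinum \<pi> kx" "x [^]\<^bsub>Q\<^esub> kx = \<one>\<^bsub>Q\<^esub>"
    using x0(2) by auto
  have "x \<in> Ord_pi Q (carrier Q) \<pi>" by (rule Q.Ord_pi_I[OF x(1) x(1) xk])
  then have xF: "x \<in> F" unfolding F_def using x(2) by simp
  have F1: "1 \<le> card F" using xF finF by (metis One_nat_def Suc_leI card_gt_0_iff empty_iff)
  have ordC: "\<And>k. group.ord C k = Q.ord k" unfolding C_def by (rule ord_sub_eq[OF Q Ks])
  have carrC: "carrier C = K" by (simp add: C_def)
  let ?c1 = "comm_group C \<and> Ord_pi' C (carrier C) \<pi> = carrier C"
  let ?c2 = "comm_group C \<and> Ord_pi C (carrier C) \<pi> = carrier C"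
  define S where "S = {card (Ord_pi A (Inn C #>\<^bsub>A\<^esub> \<alpha>) \<pi>) | \<alpha>. \<alpha> \<in> Ord_pi A (carrier A) \<pi>}"
  have finS: "finite S"
  proof -
    have "S = (\<lambda>\<alpha>. card (Ord_pi A (Inn C #>\<^bsub>A\<^esub> \<alpha>) \<pi>)) ` Ord_pi A (carrier A) \<pi>"
      unfolding S_def by blast
    moreover have "finite (Ord_pi A (carrier A) \<pi>)"
      using finA by (rule rev_finite_subset) (auto simp: Ord_pi_def)
    ultimately show ?thesis by simp
  qed
  have fdef: "f_pi \<pi> C = (if ?c1 then 1 else if ?c2 then order C else Min S)"
    unfolding f_pi_def S_def A_def by simp
  have "f_pi \<pi> C \<le> card F"
  proof (cases ?c1)
    case True then show ?thesis using fdef F1 by simp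
  next
    case nc1: False
    show ?thesis
    proof (cases ?c2)
      case True
      then have fe: "f_pi \<pi> C = card K" using fdef nc1 by (simp add: order_def C_def)
      have fib: "{z \<in> carrier Q. \<phi> z = y} \<subseteq> F"
      proof
        fix z assume z: "z \<in> {z \<in> carrier Q. \<phi> z = y}"
        then have zc: "z \<in> carrier Q" and zy: "\<phi> z = y" by auto
        define w where "w = z [^]\<^bsub>Q\<^esub> m"
        have wc: "w \<in> carrier Q" using zc w_def by simp
        have "\<phi> w = \<one>\<^bsub>Q'\<^esub>" using gh.hom_nat_pow[OF zc] zy ym w_def by simp
        then have wK: "w \<in> K" using Kdef wc by simp
        then have "w \<in> Ord_pi C (carrier C) \<pi>" using True carrC by simp
        then have "\<forall>p. Factorial_Ring.prime p \<longrightarrow> p dvd Q.ord w \<longrightarrow> p \<in> \<pi>"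
          by (simp add: Ord_pi_def ordC)
        then obtain m' where m': "pinum \<pi> m'" "w [^]\<^bsub>Q\<^esub> m' = \<one>\<^bsub>Q\<^esub>"
          using Q.pi_to_pow[OF wc fin] by blast
        have "z [^]\<^bsub>Q\<^esub> (m * m') = \<one>\<^bsub>Q\<^esub>" using m'(2) w_def zc by (simp add: Q.nat_pow_pow)
        then have "z \<in> Ord_pi Q (carrier Q) \<pi>" by (rule Q.Ord_pi_I[OF zc zc pinum_mult[OF ym(1) m'(1)]])
        then show "z \<in> F" unfolding F_def using zy by simp
      qed
      have "card K = card ((\<lambda>k. x \<otimes>\<^bsub>Q\<^esub> k) ` K)"
      proof (rule card_image[symmetric], rule inj_onI)
        fix a b assume "a \<in> K" "b \<in> K" "x \<otimes>\<^bsub>Q\<^esub> a = x \<otimes>\<^bsub>Q\<^esub> b"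
        then show "a = b" using Ksub x(1) Q.l_cancel by blast
      qed
      also have "\<dots> \<le> card {z \<in> carrier Q. \<phi> z = y}"
      proof (rule card_mono)
        show "finite {z \<in> carrier Q. \<phi> z = y}" using fin by simp
        show "(\<lambda>k. x \<otimes>\<^bsub>Q\<^esub> k) ` K \<subseteq> {z \<in> carrier Q. \<phi> z = y}"
          using Ksub x Kdef by auto
      qed
      also have "\<dots> \<le> card F" using fib finF card_mono by blast
      finally show ?thesis using fe by simp
    next
      case nc2: False
      have fe: "f_pi \<pi> C = Min S" using fdef nc1 nc2 by simp
      have carrA: "carrier A = carrier (AutoGroup (Q\<lparr>carrier := K\<rparr>))" by (simp add: A_def C_def)
      have mulA: "monoid.mult A = monoid.mult (AutoGroup (Q\<lparr>carrier := K\<rparr>))" by (simp add: A_def C_def)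
      have oneA: "one A = one (AutoGroup (Q\<lparr>carrier := K\<rparr>))" by (simp add: A_def C_def)
      have powA: "\<And>a n. a [^]\<^bsub>A\<^esub> (n::nat) = a [^]\<^bsub>AutoGroup (Q\<lparr>carrier := K\<rparr>)\<^esub> n"
        by (simp add: A_def C_def)
      show ?thesis
      proof (cases "comm_group C")
        case True
        have one_in: "\<one>\<^bsub>A\<^esub> \<in> Ord_pi A (carrier A) \<pi>"
          using group.Ord_pi_I[OF gA, of "\<one>\<^bsub>A\<^esub>" "carrier A" \<pi> 1] gA
          by (simp add: pinum_def group.is_monoid monoid.one_closed)
        have innone: "\<And>g. g \<in> K \<Longrightarrow> inn C g = \<one>\<^bsub>A\<^esub>"
        proof -
          fix g assume g: "g \<in> K"
          have "inn C g = cj Q K g" unfolding C_def using Q.inn_cj[OF KN g] .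
          also have "\<dots> = cj Q K \<one>\<^bsub>Q\<^esub>"
          proof -
            have "\<And>k. k \<in> K \<Longrightarrow> g \<otimes>\<^bsub>Q\<^esub> k \<otimes>\<^bsub>Q\<^esub> inv\<^bsub>Q\<^esub> g = k"
            proof -
              fix k assume k: "k \<in> K"
              have "g \<otimes>\<^bsub>Q\<^esub> k = k \<otimes>\<^bsub>Q\<^esub> g"
                using comm_monoid.m_comm[OF comm_group.axioms(1)[OF True], of g k] g k by (simp add: C_def)
              then show "g \<otimes>\<^bsub>Q\<^esub> k \<otimes>\<^bsub>Q\<^esub> inv\<^bsub>Q\<^esub> g = k"
                using g k Ksub by (simp add: Q.m_assoc subsetD)
            qed
            then show ?thesis using Ksub by (auto simp: cj_def intro!: restrict_ext)
          qed
          also have "\<dots> = \<one>\<^bsub>A\<^esub>" using Q.cj_one[OF KN] oneA by simp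
          finally show "inn C g = \<one>\<^bsub>A\<^esub>" .
        qed
        have "Inn C #>\<^bsub>A\<^esub> \<one>\<^bsub>A\<^esub> \<subseteq> {\<one>\<^bsub>A\<^esub>}"
        proof
          fix \<beta> assume "\<beta> \<in> Inn C #>\<^bsub>A\<^esub> \<one>\<^bsub>A\<^esub>"
          then obtain g where g: "g \<in> K" "\<beta> = inn C g \<otimes>\<^bsub>A\<^esub> \<one>\<^bsub>A\<^esub>"
            by (auto simp: r_coset_def Inn_def carrC)
          then show "\<beta> \<in> {\<one>\<^bsub>A\<^esub>}"
            using innone[OF g(1)] monoid.l_one[OF group.is_monoid[OF gA] monoid.one_closed[OF group.is_monoid[OF gA]]]
            by simp
        qed
        then have "card (Ord_pi A (Inn C #>\<^bsub>A\<^esub> \<one>\<^bsub>A\<^esub>) \<pi>) \<le> 1"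
        proof -
          assume a: "Inn C #>\<^bsub>A\<^esub> \<one>\<^bsub>A\<^esub> \<subseteq> {\<one>\<^bsub>A\<^esub>}"
          have "Ord_pi A (Inn C #>\<^bsub>A\<^esub> \<one>\<^bsub>A\<^esub>) \<pi> \<subseteq> {\<one>\<^bsub>A\<^esub>}"
            using a unfolding Ord_pi_def by blast
          then have "card (Ord_pi A (Inn C #>\<^bsub>A\<^esub> \<one>\<^bsub>A\<^esub>) \<pi>) \<le> card {\<one>\<^bsub>A\<^esub>}"
            by (intro card_mono) auto
          then show ?thesis by simp
        qed
        moreover have "card (Ord_pi A (Inn C #>\<^bsub>A\<^esub> \<one>\<^bsub>A\<^esub>) \<pi>) \<in> S"
          unfolding S_def using one_in by blast
        ultimately have "Min S \<le> 1" using finS Min_le order_trans by blast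
        then show ?thesis using fe F1 by simp
      next
        case ncomm: False
        define Z where "Z = {k \<in> K. \<forall>j\<in>K. k \<otimes>\<^bsub>Q\<^esub> j = j \<otimes>\<^bsub>Q\<^esub> k}"
        have ZN: "Z \<lhd> Q"
        proof -
          have Zsub: "Z \<subseteq> K" by (auto simp: Z_def)
          have Zc: "Z \<subseteq> carrier Q" using Zsub Ksub by auto
          have sg: "subgroup Z Q"
          proof (rule Q.subgroupI)
            show "Z \<subseteq> carrier Q" by fact
            have "\<one>\<^bsub>Q\<^esub> \<in> K" using subgroup.one_closed[OF Ks] .
            then have "\<one>\<^bsub>Q\<^esub> \<in> Z" using Ksub by (auto simp: Z_def)
            then show "Z \<noteq> {}" by blast
          next
            fix a assume a: "a \<in> Z"
            then have aK: "a \<in> K" and ac: "a \<in> carrier Q" using Zsub Zc by auto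
            have "inv\<^bsub>Q\<^esub> a \<in> K" using subgroup.m_inv_closed[OF Ks aK] .
            moreover have "\<forall>j\<in>K. inv\<^bsub>Q\<^esub> a \<otimes>\<^bsub>Q\<^esub> j = j \<otimes>\<^bsub>Q\<^esub> inv\<^bsub>Q\<^esub> a"
            proof
              fix j assume j: "j \<in> K"
              then have jc: "j \<in> carrier Q" using Ksub by blast
              have "a \<otimes>\<^bsub>Q\<^esub> j = j \<otimes>\<^bsub>Q\<^esub> a" using a j unfolding Z_def by blast
              then show "inv\<^bsub>Q\<^esub> a \<otimes>\<^bsub>Q\<^esub> j = j \<otimes>\<^bsub>Q\<^esub> inv\<^bsub>Q\<^esub> a" by (rule Q.comm_inv[OF ac jc])
            qed
            ultimately show "inv\<^bsub>Q\<^esub> a \<in> Z" by (simp add: Z_def)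
          next
            fix a b assume a: "a \<in> Z" and b: "b \<in> Z"
            then have aK: "a \<in> K" "b \<in> K" and ac: "a \<in> carrier Q" "b \<in> carrier Q" using Zsub Zc by auto
            have "a \<otimes>\<^bsub>Q\<^esub> b \<in> K" using subgroup.m_closed[OF Ks aK] .
            moreover have "\<forall>j\<in>K. a \<otimes>\<^bsub>Q\<^esub> b \<otimes>\<^bsub>Q\<^esub> j = j \<otimes>\<^bsub>Q\<^esub> (a \<otimes>\<^bsub>Q\<^esub> b)"
            proof
              fix j assume j: "j \<in> K"
              then have jc: "j \<in> carrier Q" using Ksub by blast
              have "a \<otimes>\<^bsub>Q\<^esub> j = j \<otimes>\<^bsub>Q\<^esub> a" "b \<otimes>\<^bsub>Q\<^esub> j = j \<otimes>\<^bsub>Q\<^esub> b"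
                using a b j unfolding Z_def by blast+
              then show "a \<otimes>\<^bsub>Q\<^esub> b \<otimes>\<^bsub>Q\<^esub> j = j \<otimes>\<^bsub>Q\<^esub> (a \<otimes>\<^bsub>Q\<^esub> b)" by (rule Q.comm_mult[OF ac(1,2) jc])
            qed
            ultimately show "a \<otimes>\<^bsub>Q\<^esub> b \<in> Z" by (simp add: Z_def)
          qed
          have "\<forall>x\<in>carrier Q. \<forall>h\<in>Z. x \<otimes>\<^bsub>Q\<^esub> h \<otimes>\<^bsub>Q\<^esub> inv\<^bsub>Q\<^esub> x \<in> Z"
          proof (intro ballI)
            fix x h assume x: "x \<in> carrier Q" and h: "h \<in> Z"
            have hK: "h \<in> K" and hc: "h \<in> carrier Q" using h Zsub Zc by auto
            have "x \<otimes>\<^bsub>Q\<^esub> h \<otimes>\<^bsub>Q\<^esub> inv\<^bsub>Q\<^esub> x \<in> K" by (rule normal.inv_op_closed2[OF KN x hK])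
            moreover have "\<forall>j\<in>K. (x \<otimes>\<^bsub>Q\<^esub> h \<otimes>\<^bsub>Q\<^esub> inv\<^bsub>Q\<^esub> x) \<otimes>\<^bsub>Q\<^esub> j = j \<otimes>\<^bsub>Q\<^esub> (x \<otimes>\<^bsub>Q\<^esub> h \<otimes>\<^bsub>Q\<^esub> inv\<^bsub>Q\<^esub> x)"
            proof
              fix j assume j: "j \<in> K"
              have jc: "j \<in> carrier Q" using j Ksub by auto
              have ix: "inv\<^bsub>Q\<^esub> x \<in> carrier Q" using x by simp
              have "inv\<^bsub>Q\<^esub> x \<otimes>\<^bsub>Q\<^esub> j \<otimes>\<^bsub>Q\<^esub> inv\<^bsub>Q\<^esub> (inv\<^bsub>Q\<^esub> x) \<in> K"
                by (rule normal.inv_op_closed2[OF KN ix j])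
              then have j': "inv\<^bsub>Q\<^esub> x \<otimes>\<^bsub>Q\<^esub> j \<otimes>\<^bsub>Q\<^esub> x \<in> K" using x by simp
              then have "h \<otimes>\<^bsub>Q\<^esub> (inv\<^bsub>Q\<^esub> x \<otimes>\<^bsub>Q\<^esub> j \<otimes>\<^bsub>Q\<^esub> x) = (inv\<^bsub>Q\<^esub> x \<otimes>\<^bsub>Q\<^esub> j \<otimes>\<^bsub>Q\<^esub> x) \<otimes>\<^bsub>Q\<^esub> h"
                using h unfolding Z_def by blast
              then show "(x \<otimes>\<^bsub>Q\<^esub> h \<otimes>\<^bsub>Q\<^esub> inv\<^bsub>Q\<^esub> x) \<otimes>\<^bsub>Q\<^esub> j = j \<otimes>\<^bsub>Q\<^esub> (x \<otimes>\<^bsub>Q\<^esub> h \<otimes>\<^bsub>Q\<^esub> inv\<^bsub>Q\<^esub> x)"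
                by (rule Q.comm_conj[OF x hc jc])
            qed
            ultimately show "x \<otimes>\<^bsub>Q\<^esub> h \<otimes>\<^bsub>Q\<^esub> inv\<^bsub>Q\<^esub> x \<in> Z" by (simp add: Z_def)
          qed
          then show ?thesis using sg by (simp add: Q.normal_inv_iff)
        qed
        have "Z \<noteq> K"
        proof
          assume "Z = K"
          then have "comm_group C"
            using group.group_comm_groupI[OF gC] by (auto simp: C_def Z_def)
          then show False using ncomm by simp
        qed
        then have Z1: "Z = {\<one>\<^bsub>Q\<^esub>}" using minimal[OF ZN] Z_def by blast
        define \<alpha> where "\<alpha> = cj Q K x"
        have \<alpha>A: "\<alpha> \<in> carrier A" using Q.cj_auto[OF KN x(1)] carrA \<alpha>_def by simp
        have "\<alpha> [^]\<^bsub>A\<^esub> kx = \<one>\<^bsub>A\<^esub>"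
          using Q.cj_pow[OF KN x(1)] xk Q.cj_one[OF KN] powA oneA \<alpha>_def by simp
        then have \<alpha>O: "\<alpha> \<in> Ord_pi A (carrier A) \<pi>" using group.Ord_pi_I[OF gA \<alpha>A \<alpha>A xk(1)] by simp
        have sub: "Ord_pi A (Inn C #>\<^bsub>A\<^esub> \<alpha>) \<pi> \<subseteq> cj Q K ` F"
        proof
          fix \<beta> assume \<beta>: "\<beta> \<in> Ord_pi A (Inn C #>\<^bsub>A\<^esub> \<alpha>) \<pi>"
          then have \<beta>A: "\<beta> \<in> carrier A" and \<beta>co: "\<beta> \<in> Inn C #>\<^bsub>A\<^esub> \<alpha>" by (auto simp: Ord_pi_def)
          obtain m1 where m1: "pinum \<pi> m1" "\<beta> [^]\<^bsub>A\<^esub> m1 = \<one>\<^bsub>A\<^esub>"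
            using \<beta> group.Ord_pi_iff[OF gA finA] by blast
          obtain n where n: "n \<in> K" "\<beta> = inn C n \<otimes>\<^bsub>A\<^esub> \<alpha>"
            using \<beta>co by (auto simp: r_coset_def Inn_def carrC)
          have nc: "n \<in> carrier Q" using n Ksub by auto
          define z where "z = n \<otimes>\<^bsub>Q\<^esub> x"
          have zc: "z \<in> carrier Q" using nc x z_def by simp
          have \<beta>z: "\<beta> = cj Q K z"
            using n Q.inn_cj[OF KN n(1)] Q.cj_mult[OF KN nc x(1)] mulA \<alpha>_def z_def by (simp add: C_def)
          have zy: "\<phi> z = y" using z_def nc x n Kdef y by simp
          define w where "w = (z [^]\<^bsub>Q\<^esub> m1) [^]\<^bsub>Q\<^esub> m"
          have wc: "w \<in> carrier Q" using zc w_def by simp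
          have "\<phi> w = (y [^]\<^bsub>Q'\<^esub> m) [^]\<^bsub>Q'\<^esub> m1"
            using gh.hom_nat_pow zc zy w_def y by (simp add: Q.nat_pow_pow Q'.nat_pow_pow mult.commute)
          then have wK: "w \<in> K" using Kdef wc ym by simp
          have "cj Q K (z [^]\<^bsub>Q\<^esub> m1) = \<one>\<^bsub>A\<^esub>"
            using m1 \<beta>z Q.cj_pow[OF KN zc] powA by simp
          then have e1: "cj Q K (z [^]\<^bsub>Q\<^esub> m1) [^]\<^bsub>A\<^esub> m = \<one>\<^bsub>A\<^esub>"
            using monoid.nat_pow_one[OF group.is_monoid[OF gA]] by simp
          have zmc: "z [^]\<^bsub>Q\<^esub> m1 \<in> carrier Q" using zc by simp
          have "cj Q K w = cj Q K (z [^]\<^bsub>Q\<^esub> m1) [^]\<^bsub>A\<^esub> m"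
            using Q.cj_pow[OF KN zmc, of m] powA w_def by simp
          then have "cj Q K w = \<one>\<^bsub>A\<^esub>" using e1 by simp
          then have "w \<in> Z" using Q.cj_eq_one[OF KN wc] oneA wK by (auto simp: Z_def)
          then have "w = \<one>\<^bsub>Q\<^esub>" using Z1 by simp
          then have "z [^]\<^bsub>Q\<^esub> (m1 * m) = \<one>\<^bsub>Q\<^esub>" using w_def zc by (simp add: Q.nat_pow_pow)
          then have "z \<in> Ord_pi Q (carrier Q) \<pi>" by (rule Q.Ord_pi_I[OF zc zc pinum_mult[OF m1(1) ym(1)]])
          then have "z \<in> F" unfolding F_def using zy by simp
          then show "\<beta> \<in> cj Q K ` F" using \<beta>z by blast
        qed
        have "Min S \<le> card (Ord_pi A (Inn C #>\<^bsub>A\<^esub> \<alpha>) \<pi>)"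
          using finS \<alpha>O by (intro Min_le) (auto simp: S_def)
        also have "\<dots> \<le> card (cj Q K ` F)" using sub finF by (intro card_mono) auto
        also have "\<dots> \<le> card F" using card_image_le finF by blast
        finally show ?thesis using fe by simp
      qed
    qed
  qed
  then show ?thesis unfolding C_def F_def .
qed


lemma lift_count:
  assumes G: "group G" and H: "group H" and fin: "finite (carrier G)"
    and hom: "\<phi> \<in> hom G H" and surj: "\<phi> ` carrier G = carrier H"
  shows "card (Ord_pi H (carrier H) \<pi>) \<le> card (Ord_pi G (carrier G) \<pi>)"
proof -
  have finH: "finite (carrier H)" using surj fin by (metis finite_imageI)
  have "1 * card (Ord_pi H (carrier H) \<pi>) \<le> card (Ord_pi G (carrier G) \<pi>)"
  proof (rule count_fibers[OF G H fin surj], rule ballI)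
    fix y assume y: "y \<in> Ord_pi H (carrier H) \<pi>"
    then have yc: "y \<in> carrier H" by (simp add: Ord_pi_def)
    obtain m where m: "pinum \<pi> m" "y [^]\<^bsub>H\<^esub> m = \<one>\<^bsub>H\<^esub>"
      using y group.Ord_pi_iff[OF H finH] by blast
    have "y \<in> \<phi> ` carrier G" using surj yc by simp
    then obtain x0 where x0: "x0 \<in> carrier G" "\<phi> x0 = y" by (rule imageE) auto
    have "\<exists>x\<in>carrier G. \<phi> x = \<phi> x0 \<and> (\<exists>k. pinum \<pi> k \<and> x [^]\<^bsub>G\<^esub> k = \<one>\<^bsub>G\<^esub>)"
      by (rule lift_pi[OF G H fin hom x0(1) m(1)]) (simp add: x0(2) m(2))
    then obtain x k where x: "x \<in> carrier G" "\<phi> x = y" and k: "pinum \<pi> k" "x [^]\<^bsub>G\<^esub> k = \<one>\<^bsub>G\<^esub>"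
      using x0(2) by auto
    have "x \<in> Ord_pi G (carrier G) \<pi>" by (rule group.Ord_pi_I[OF G x(1) x(1) k])
    then have "x \<in> {x \<in> Ord_pi G (carrier G) \<pi>. \<phi> x = y}" using x(2) by simp
    moreover have "finite {x \<in> Ord_pi G (carrier G) \<pi>. \<phi> x = y}"
      using fin by (rule rev_finite_subset) (auto simp: Ord_pi_def)
    ultimately show "1 \<le> card {x \<in> Ord_pi G (carrier G) \<pi>. \<phi> x = y}"
      by (metis One_nat_def Suc_leI card_gt_0_iff empty_iff)
  qed
  then show ?thesis by simp
qed

lemma one_count:
  assumes G: "group G" and fin: "finite (carrier G)"
  shows "1 \<le> card (Ord_pi G (carrier G) \<pi>)"
proof -
  have oc: "\<one>\<^bsub>G\<^esub> \<in> carrier G" using G by (simp add: group.is_monoid monoid.one_closed)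
  have "\<one>\<^bsub>G\<^esub> [^]\<^bsub>G\<^esub> (1::nat) = \<one>\<^bsub>G\<^esub>" using G oc by (simp add: group.is_monoid monoid.l_one)
  moreover have "pinum \<pi> 1" by (simp add: pinum_def)
  ultimately have "\<one>\<^bsub>G\<^esub> \<in> Ord_pi G (carrier G) \<pi>" using group.Ord_pi_I[OF G oc oc] by blast
  moreover have "finite (Ord_pi G (carrier G) \<pi>)"
    using fin by (rule rev_finite_subset) (auto simp: Ord_pi_def)
  ultimately show ?thesis by (metis One_nat_def Suc_leI card_gt_0_iff empty_iff)
qed

lemma normal_vimage:
  assumes G: "group G" and H: "group H" and hom: "h \<in> hom G H" and MN: "\<M> \<lhd> H"
  shows "{g \<in> carrier G. h g \<in> \<M>} \<lhd> G"
proof -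
  interpret G: group G by fact
  interpret H: group H by fact
  interpret gh: group_hom G H h using hom by (unfold_locales) auto
  have Ms: "subgroup \<M> H" using MN normal_imp_subgroup by blast
  let ?U = "{g \<in> carrier G. h g \<in> \<M>}"
  have sg: "subgroup ?U G"
  proof (rule G.subgroupI)
    show "?U \<subseteq> carrier G" by blast
    have "h \<one>\<^bsub>G\<^esub> \<in> \<M>" using subgroup.one_closed[OF Ms] by simp
    then show "?U \<noteq> {}" by blast
  next
    fix a assume a: "a \<in> ?U"
    then have "h (inv\<^bsub>G\<^esub> a) = inv\<^bsub>H\<^esub> (h a)" by simp
    then show "inv\<^bsub>G\<^esub> a \<in> ?U" using a subgroup.m_inv_closed[OF Ms] by simp
  next
    fix a b assume a: "a \<in> ?U" and b: "b \<in> ?U"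
    then show "a \<otimes>\<^bsub>G\<^esub> b \<in> ?U" using subgroup.m_closed[OF Ms] by simp
  qed
  have "\<forall>x\<in>carrier G. \<forall>u\<in>?U. x \<otimes>\<^bsub>G\<^esub> u \<otimes>\<^bsub>G\<^esub> inv\<^bsub>G\<^esub> x \<in> ?U"
  proof (intro ballI)
    fix x u assume x: "x \<in> carrier G" and u: "u \<in> ?U"
    have "h (x \<otimes>\<^bsub>G\<^esub> u \<otimes>\<^bsub>G\<^esub> inv\<^bsub>G\<^esub> x) = h x \<otimes>\<^bsub>H\<^esub> h u \<otimes>\<^bsub>H\<^esub> inv\<^bsub>H\<^esub> (h x)"
      using x u by simp
    moreover have "h x \<otimes>\<^bsub>H\<^esub> h u \<otimes>\<^bsub>H\<^esub> inv\<^bsub>H\<^esub> (h x) \<in> \<M>"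
      using normal.inv_op_closed2[OF MN, of "h x" "h u"] x u by simp
    ultimately show "x \<otimes>\<^bsub>G\<^esub> u \<otimes>\<^bsub>G\<^esub> inv\<^bsub>G\<^esub> x \<in> ?U" using x u by simp
  qed
  then show ?thesis using sg by (simp add: G.normal_inv_iff)
qed


lemma chief_step:
  assumes G: "group G" and fin: "finite (carrier G)"
    and NN: "N \<lhd> G" and MN: "M \<lhd> G" and NM: "N \<subset> M"
    and nob: "\<not> (\<exists>U. U \<lhd> G \<and> N \<subset> U \<and> U \<subset> M)"
  shows "f_pi \<pi> (G\<lparr>carrier := M\<rparr> Mod N) * card (Ord_pi (G Mod M) (carrier (G Mod M)) \<pi>)
           \<le> card (Ord_pi (G Mod N) (carrier (G Mod N)) \<pi>)"
proof -
  interpret G: group G by fact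
  interpret N: normal N G by fact
  interpret M: normal M G by fact
  have Ns: "subgroup N G" and Ms: "subgroup M G" using NN MN normal_imp_subgroup by blast+
  have Nc: "N \<subseteq> carrier G" and Mc: "M \<subseteq> carrier G" using Ns Ms subgroup.subset by blast+
  define Q where "Q = G Mod N"
  define Q' where "Q' = G Mod M"
  have gQ: "group Q" unfolding Q_def by (rule N.factorgroup_is_group)
  have gQ': "group Q'" unfolding Q'_def by (rule M.factorgroup_is_group)
  have finQ: "finite (carrier Q)" unfolding Q_def carrier_FactGroup using fin by simp
  define \<phi> where "\<phi> = (\<lambda>W. M <#>\<^bsub>G\<^esub> W)"
  have MN_eq: "M <#>\<^bsub>G\<^esub> N = M"
  proof
    show "M <#>\<^bsub>G\<^esub> N \<subseteq> M" using NM subgroup.m_closed[OF Ms] by (auto simp: set_mult_def)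
    show "M \<subseteq> M <#>\<^bsub>G\<^esub> N"
    proof
      fix m assume m: "m \<in> M"
      then have "m = m \<otimes>\<^bsub>G\<^esub> \<one>\<^bsub>G\<^esub>" using Mc by auto
      moreover have "\<one>\<^bsub>G\<^esub> \<in> N" using subgroup.one_closed[OF Ns] .
      ultimately show "m \<in> M <#>\<^bsub>G\<^esub> N" using m unfolding set_mult_def by blast
    qed
  qed
  have phi_r: "\<And>g. g \<in> carrier G \<Longrightarrow> \<phi> (N #>\<^bsub>G\<^esub> g) = M #>\<^bsub>G\<^esub> g"
    unfolding \<phi>_def using G.setmult_rcos_assoc[OF Mc Nc] MN_eq by simp
  have hom: "\<phi> \<in> hom Q Q'"
  proof (rule homI)
    fix W assume "W \<in> carrier Q"
    then obtain g where g: "g \<in> carrier G" "W = N #>\<^bsub>G\<^esub> g" unfolding Q_def carrier_FactGroup by blast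
    then show "\<phi> W \<in> carrier Q'" unfolding Q'_def carrier_FactGroup using phi_r by simp
  next
    fix W V assume "W \<in> carrier Q" "V \<in> carrier Q"
    then obtain a b where ab: "a \<in> carrier G" "W = N #>\<^bsub>G\<^esub> a" "b \<in> carrier G" "V = N #>\<^bsub>G\<^esub> b"
      unfolding Q_def carrier_FactGroup by blast
    have "\<phi> (W \<otimes>\<^bsub>Q\<^esub> V) = \<phi> (N #>\<^bsub>G\<^esub> (a \<otimes>\<^bsub>G\<^esub> b))"
      using ab N.rcos_sum by (simp add: Q_def)
    also have "\<dots> = M #>\<^bsub>G\<^esub> (a \<otimes>\<^bsub>G\<^esub> b)" using phi_r ab by simp
    also have "\<dots> = (M #>\<^bsub>G\<^esub> a) <#>\<^bsub>G\<^esub> (M #>\<^bsub>G\<^esub> b)" using M.rcos_sum ab by simp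
    also have "\<dots> = \<phi> W \<otimes>\<^bsub>Q'\<^esub> \<phi> V" using phi_r ab by (simp add: Q'_def)
    finally show "\<phi> (W \<otimes>\<^bsub>Q\<^esub> V) = \<phi> W \<otimes>\<^bsub>Q'\<^esub> \<phi> V" .
  qed
  have surj: "\<phi> ` carrier Q = carrier Q'"
  proof
    show "\<phi> ` carrier Q \<subseteq> carrier Q'" using hom by (auto simp: hom_def)
    show "carrier Q' \<subseteq> \<phi> ` carrier Q"
    proof
      fix V assume "V \<in> carrier Q'"
      then obtain g where g: "g \<in> carrier G" "V = M #>\<^bsub>G\<^esub> g" unfolding Q'_def carrier_FactGroup by blast
      then have "V = \<phi> (N #>\<^bsub>G\<^esub> g)" using phi_r by simp
      moreover have "N #>\<^bsub>G\<^esub> g \<in> carrier Q" unfolding Q_def carrier_FactGroup using g by blast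
      ultimately show "V \<in> \<phi> ` carrier Q" by blast
    qed
  qed
  define K where "K = {W \<in> carrier Q. \<phi> W = \<one>\<^bsub>Q'\<^esub>}"
  have ker_iff: "\<And>g. g \<in> carrier G \<Longrightarrow> \<phi> (N #>\<^bsub>G\<^esub> g) = \<one>\<^bsub>Q'\<^esub> \<longleftrightarrow> g \<in> M"
  proof -
    fix g assume g: "g \<in> carrier G"
    have "M #>\<^bsub>G\<^esub> g = M \<longleftrightarrow> g \<in> M"
    proof
      assume "M #>\<^bsub>G\<^esub> g = M"
      then show "g \<in> M" using G.rcos_self[OF g Ms] by simp
    next
      assume "g \<in> M" then show "M #>\<^bsub>G\<^esub> g = M" using subgroup.rcos_const[OF Ms G] by blast
    qed
    then show "\<phi> (N #>\<^bsub>G\<^esub> g) = \<one>\<^bsub>Q'\<^esub> \<longleftrightarrow> g \<in> M" using phi_r[OF g] by (simp add: Q'_def)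
  qed
  have Kim: "K = (\<lambda>g. N #>\<^bsub>G\<^esub> g) ` M"
  proof
    show "K \<subseteq> (\<lambda>g. N #>\<^bsub>G\<^esub> g) ` M"
    proof
      fix W assume W: "W \<in> K"
      then obtain g where g: "g \<in> carrier G" "W = N #>\<^bsub>G\<^esub> g" unfolding K_def Q_def carrier_FactGroup by blast
      then have "g \<in> M" using W ker_iff unfolding K_def by blast
      then show "W \<in> (\<lambda>g. N #>\<^bsub>G\<^esub> g) ` M" using g by blast
    qed
    show "(\<lambda>g. N #>\<^bsub>G\<^esub> g) ` M \<subseteq> K"
    proof
      fix W assume "W \<in> (\<lambda>g. N #>\<^bsub>G\<^esub> g) ` M"
      then obtain g where g: "g \<in> M" "W = N #>\<^bsub>G\<^esub> g" by blast
      have gc: "g \<in> carrier G" using g Mc by blast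
      have "W \<in> carrier Q" unfolding Q_def carrier_FactGroup using g gc by blast
      then show "W \<in> K" unfolding K_def using ker_iff[OF gc] g by simp
    qed
  qed
  have CF: "Q\<lparr>carrier := K\<rparr> = G\<lparr>carrier := M\<rparr> Mod N"
  proof -
    have r: "\<And>a. r_coset (G\<lparr>carrier := M\<rparr>) N a = N #>\<^bsub>G\<^esub> a" by (simp add: r_coset_def)
    have "rcosets\<^bsub>G\<lparr>carrier := M\<rparr>\<^esub> N = K" unfolding Kim RCOSETS_def r by auto
    moreover have "set_mult (G\<lparr>carrier := M\<rparr>) = set_mult G" by (simp add: set_mult_def fun_eq_iff)
    ultimately show ?thesis by (simp add: Q_def FactGroup_def)
  qed
  have minimal: "\<And>\<M>. \<M> \<lhd> Q \<Longrightarrow> \<M> \<subseteq> K \<Longrightarrow> \<M> = {\<one>\<^bsub>Q\<^esub>} \<or> \<M> = K"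
  proof -
    fix \<M> assume MQ: "\<M> \<lhd> Q" and MK: "\<M> \<subseteq> K"
    have Msg: "subgroup \<M> Q" using MQ normal_imp_subgroup by blast
    define U where "U = {g \<in> carrier G. N #>\<^bsub>G\<^esub> g \<in> \<M>}"
    have UN: "U \<lhd> G" unfolding U_def
      by (rule normal_vimage[OF G gQ _ MQ]) (simp add: Q_def N.r_coset_hom_Mod)
    have oneM: "N \<in> \<M>" using subgroup.one_closed[OF Msg] by (simp add: Q_def)
    have NU: "N \<subseteq> U"
    proof
      fix n assume n: "n \<in> N"
      then have "N #>\<^bsub>G\<^esub> n = N" using subgroup.rcos_const[OF Ns G] by blast
      then show "n \<in> U" using n Nc oneM unfolding U_def by auto
    qed
    have UM: "U \<subseteq> M"
    proof
      fix g assume "g \<in> U"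
      then have g: "g \<in> carrier G" "N #>\<^bsub>G\<^esub> g \<in> K" using MK unfolding U_def by auto
      then show "g \<in> M" using ker_iff[OF g(1)] unfolding K_def by blast
    qed
    have "U = N \<or> U = M" using nob UN NU UM by blast
    then show "\<M> = {\<one>\<^bsub>Q\<^esub>} \<or> \<M> = K"
    proof
      assume UN': "U = N"
      have "\<M> \<subseteq> {N}"
      proof
        fix W assume W: "W \<in> \<M>"
        then have "W \<in> carrier Q" using Msg subgroup.subset by blast
        then obtain g where g: "g \<in> carrier G" "W = N #>\<^bsub>G\<^esub> g" unfolding Q_def carrier_FactGroup by blast
        then have "g \<in> N" using W UN' unfolding U_def by blast
        then have "W = N" using g subgroup.rcos_const[OF Ns G] by blast
        then show "W \<in> {N}" by simp
      qed
      then have "\<M> = {N}" using oneM by blast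
      then show ?thesis by (simp add: Q_def)
    next
      assume UM': "U = M"
      have "K \<subseteq> \<M>"
      proof
        fix W assume "W \<in> K"
        then obtain g where g: "g \<in> M" "W = N #>\<^bsub>G\<^esub> g" using Kim by blast
        then show "W \<in> \<M>" using UM' unfolding U_def by blast
      qed
      then show ?thesis using MK by blast
    qed
  qed
  have "f_pi \<pi> (Q\<lparr>carrier := K\<rparr>) * card (Ord_pi Q' (carrier Q') \<pi>) \<le> card (Ord_pi Q (carrier Q) \<pi>)"
  proof (rule count_fibers[OF gQ gQ' finQ surj], rule ballI)
    fix y assume y: "y \<in> Ord_pi Q' (carrier Q') \<pi>"
    have finQ': "finite (carrier Q')" using surj finQ by (metis finite_imageI)
    have yc: "y \<in> carrier Q'" using y by (simp add: Ord_pi_def)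
    obtain m where m: "pinum \<pi> m" "y [^]\<^bsub>Q'\<^esub> m = \<one>\<^bsub>Q'\<^esub>"
      using y group.Ord_pi_iff[OF gQ' finQ'] by blast
    show "f_pi \<pi> (Q\<lparr>carrier := K\<rparr>) \<le> card {x \<in> Ord_pi Q (carrier Q) \<pi>. \<phi> x = y}"
      by (rule fiber_bound[OF gQ gQ' finQ hom surj K_def minimal yc m])
  qed
  then have "f_pi \<pi> (G\<lparr>carrier := M\<rparr> Mod N) * card (Ord_pi Q' (carrier Q') \<pi>) \<le> card (Ord_pi Q (carrier Q) \<pi>)"
    by (simp only: CF)
  then show ?thesis unfolding Q_def Q'_def .
qed


theorem lemma2p1:
  fixes G :: "('a, 'b) monoid_scheme" and \<pi> :: "nat set" and Ns :: "'a set list"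
  assumes "group G" and "finite (carrier G)"
    and "\<forall>p \<in> \<pi>. Factorial_Ring.prime p"
    and "chief_series G Ns"
  shows "card (Ord_pi G (carrier G) \<pi>) \<ge>
           (\<Prod>i < length Ns - 1. f_pi \<pi> (chief_factor G Ns i))"
proof -
  note G = assms(1) and fin = assms(2)
  interpret G: group G by fact
  define L where "L = length Ns"
  have ne: "Ns \<noteq> []" and hd: "hd Ns = {\<one>\<^bsub>G\<^esub>}" and lst: "last Ns = carrier G"
    and nrm: "\<And>i. i < L \<Longrightarrow> Ns ! i \<lhd> G"
    and chn: "\<And>i. Suc i < L \<Longrightarrow> Ns ! i \<subset> Ns ! Suc i \<and>
                \<not> (\<exists>M. M \<lhd> G \<and> Ns ! i \<subset> M \<and> M \<subset> Ns ! Suc i)"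
    using assms(4) unfolding chief_series_def L_def by auto
  have L1: "L \<ge> 1" using ne L_def by (cases Ns) auto
  define f where "f i = f_pi \<pi> (chief_factor G Ns i)" for i
  define c where "c i = card (Ord_pi (G Mod (Ns ! i)) (carrier (G Mod (Ns ! i))) \<pi>)" for i
  have step: "f i * c (Suc i) \<le> c i" if "Suc i < L" for i
  proof -
    have "f_pi \<pi> (G\<lparr>carrier := Ns ! Suc i\<rparr> Mod (Ns ! i)) * c (Suc i) \<le> c i"
      unfolding c_def
      by (rule chief_step[OF G fin nrm nrm]) (use that chn in auto)
    then show ?thesis by (simp add: f_def chief_factor_def)
  qed
  have top: "1 \<le> c (L - 1)"
  proof -
    have N: "Ns ! (L - 1) \<lhd> G" using nrm L1 by simp
    show ?thesis unfolding c_def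
      by (rule one_count[OF normal.factorgroup_is_group[OF N]]) (simp add: carrier_FactGroup fin)
  qed
  have ind: "(\<Prod>i\<in>{L-1-k..<L-1}. f i) \<le> c (L-1-k)" if "k \<le> L - 1" for k
    using that
  proof (induction k)
    case 0 then show ?case using top by simp
  next
    case (Suc k)
    define j where "j = L - 1 - Suc k"
    have jS: "Suc j = L - 1 - k" and jl: "j < L - 1" using Suc.prems unfolding j_def by auto
    have "(\<Prod>i\<in>{j..<L-1}. f i) = f j * (\<Prod>i\<in>{Suc j..<L-1}. f i)"
      using jl by (simp add: prod.atLeast_Suc_lessThan)
    also have "\<dots> \<le> f j * c (Suc j)"
      using Suc.IH Suc.prems jS by (intro mult_le_mono2) simp
    also have "\<dots> \<le> c j" using step jl by simp
    finally show ?case unfolding j_def .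
  qed
  have "(\<Prod>i<L-1. f i) \<le> c 0"
    using ind[of "L-1"] by (simp add: atLeast0LessThan)
  also have "c 0 \<le> card (Ord_pi G (carrier G) \<pi>)"
  proof -
    have N0: "Ns ! 0 = {\<one>\<^bsub>G\<^esub>}" using hd ne by (simp add: hd_conv_nth)
    have one: "{\<one>\<^bsub>G\<^esub>} \<lhd> G" by (rule G.one_is_normal)
    show ?thesis unfolding c_def N0
      by (rule lift_count[OF G normal.factorgroup_is_group[OF one] fin normal.r_coset_hom_Mod[OF one]])
         (simp add: carrier_FactGroup)
  qed
  finally show ?thesis by (simp add: f_def L_def)
qed

end
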